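(* Let $H=([n],E)$ be a hypergraph having at least one edge of cardinality greater than $2$, and assume $H$ has two disjoint edges. Then $\Delta_H$ is not Cohen–Macaulay over any field.
   Context: A hypergraph $H=([n],E)$ has vertex set $[n]$ and edge set $E$, a collection of nonempty subsets of $[n]$; standing assumptions: every vertex lies in some edge, no edge has cardinality 1, no edge is properly contained in another. The coloring complex $\Delta_H$ is the abstract simplicial complex whose vertices are the nonempty proper subsets of $[n]$ and whose faces are the chains $\emptyset\neq A_1\subsetneq\cdots\subsetneq A_l\neq[n]$ ($l\ge0$) such that, with $A_0=\emptyset$, $A_{l+1}=[n]$, some difference $A_i\setminus A_{i-1}$ ($1\le i\le l+1$) contains an edge of $H$. *)

theory Defs
  imports Main
begin

text \<open>An abstract simplicial complex is given by its set of faces K (a set of finite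
vertex sets, closed under subsets, containing the empty face).  To orient faces we
fix an injection of the vertex set into nat (any choice gives isomorphic homology).\<close>

definition vkey :: "'v set set \<Rightarrow> 'v \<Rightarrow> nat" where
  "vkey K = (SOME f. inj_on f (\<Union>K))"

definition bsign :: "'v set set \<Rightarrow> 'v set \<Rightarrow> 'v \<Rightarrow> 'k::field" where
  "bsign K \<sigma> v = (if even (card {w\<in>\<sigma>. vkey K w < vkey K v}) then 1 else -1)"

text \<open>A q-chain: a k-valued function supported on faces of cardinality q
(i.e. of dimension q-1; q = 0 is the empty face, giving reduced homology).\<close>
definition is_chain :: "'v set set \<Rightarrow> nat \<Rightarrow> ('v set \<Rightarrow> 'k::field) \<Rightarrow> bool" where
  "is_chain K q c = (\<forall>\<sigma>. c \<sigma> \<noteq> 0 \<longrightarrow> \<sigma> \<in> K \<and> card \<sigma> = q)"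

definition bdry :: "'v set set \<Rightarrow> ('v set \<Rightarrow> 'k::field) \<Rightarrow> 'v set \<Rightarrow> 'k" where
  "bdry K c \<tau> = (\<Sum>v\<in>(\<Union>K) - \<tau>. bsign K (insert v \<tau>) v * c (insert v \<tau>))"

definition red_homology_vanishes :: "'k::field itself \<Rightarrow> 'v set set \<Rightarrow> nat \<Rightarrow> bool" where
  "red_homology_vanishes _ K q =
     (\<forall>c::'v set \<Rightarrow> 'k. is_chain K q c \<and> bdry K c = (\<lambda>_. 0) \<longrightarrow>
        (\<exists>b::'v set \<Rightarrow> 'k. is_chain K (Suc q) b \<and> bdry K b = c))"

definition link :: "'v set set \<Rightarrow> 'v set \<Rightarrow> 'v set set" where
  "link K F = {G \<in> K. G \<inter> F = {} \<and> G \<union> F \<in> K}"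

text \<open>Cohen-Macaulay over k (Reisner's criterion): for every face F, the reduced
homology of lk F vanishes below its dimension.  With m = max cardinality of a face of
lk F (so dim lk F = m-1), the condition H~_i = 0 for -1 \<le> i < m-1 reads, with q = i+1,
vanishing for all q < m.\<close>
definition cohen_macaulay_over :: "'k::field itself \<Rightarrow> 'v set set \<Rightarrow> bool" where
  "cohen_macaulay_over k K =
     (\<forall>F\<in>K. \<forall>q < Max (card ` link K F). red_homology_vanishes k (link K F) q)"

definition hypergraph :: "nat \<Rightarrow> nat set set \<Rightarrow> bool" where
  "hypergraph n E =
     ((\<forall>e\<in>E. e \<noteq> {} \<and> e \<subseteq> {1..n}) \<and>
      (\<forall>v\<in>{1..n}. \<exists>e\<in>E. v \<in> e) \<and>
      (\<forall>e\<in>E. card e \<noteq> 1) \<and>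
      (\<forall>e\<in>E. \<forall>e'\<in>E. \<not> e \<subset> e'))"

text \<open>Faces of Delta_H: chains A_1 \<subset> ... \<subset> A_l of nonempty proper subsets of [n],
represented as the set {A_1,...,A_l}, such that for some consecutive pair A \<subset> B in
{} \<union> chain \<union> {[n]} the difference B - A contains an edge.\<close>
definition coloring_complex :: "nat \<Rightarrow> nat set set \<Rightarrow> nat set set set" where
  "coloring_complex n E =
     {C. C \<subseteq> {A. A \<noteq> {} \<and> A \<subset> {1..n}} \<and>
         (\<forall>A\<in>C. \<forall>B\<in>C. A \<subseteq> B \<or> B \<subseteq> A) \<and>
         (\<exists>A\<in>insert {} (insert {1..n} C). \<exists>B\<in>insert {} (insert {1..n} C).
            A \<subset> B \<and> (\<forall>D\<in>C. \<not> (A \<subset> D \<and> D \<subset> B)) \<and>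
            (\<exists>e\<in>E. e \<subseteq> B - A))}"

end

theory Submission
  imports Defs
begin


definition flag :: "nat set \<Rightarrow> nat set set" where
  "flag R = (\<lambda>t. {x\<in>R. x \<le> t}) ` R"

lemma flag_ne: "X \<in> flag R \<Longrightarrow> X \<noteq> {} \<and> X \<subseteq> R"
  unfolding flag_def by auto

lemma flag_chain: "X \<in> flag R \<Longrightarrow> Y \<in> flag R \<Longrightarrow> X \<subseteq> Y \<or> Y \<subseteq> X"
  unfolding flag_def by auto

lemma flag_top: "finite R \<Longrightarrow> R \<noteq> {} \<Longrightarrow> R \<in> flag R"
  unfolding flag_def
  apply (rule image_eqI[where x="Max R"])
  by auto

lemma flag_consec:
  assumes A: "A \<in> insert {} (flag R)" and B: "B \<in> flag R" and AB: "A \<subset> B"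
    and nb: "\<forall>D\<in>flag R. \<not> (A \<subset> D \<and> D \<subset> B)"
    and u: "u \<in> B - A" and w: "w \<in> B - A"
  shows "u = w"
proof (rule ccontr)
  assume "u \<noteq> w"
  then have "\<exists>u w. u \<in> B - A \<and> w \<in> B - A \<and> u < w" using u w
    by (metis linorder_neq_iff)
  then obtain u w where u: "u \<in> B - A" and w: "w \<in> B - A" and uw: "u < w" by blast
  obtain t where t: "t \<in> R" "B = {x\<in>R. x \<le> t}" using B unfolding flag_def by auto
  have uR: "u \<in> R" "u \<le> t" using u t by auto
  define I where "I = {x\<in>R. x \<le> u}"
  have I: "I \<in> flag R" unfolding I_def flag_def using uR by auto
  have "A \<subset> I"
  proof (cases "A = {}")
    case True then show ?thesis using uR unfolding I_def by auto
  next
    case False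
    then obtain s where s: "s \<in> R" "A = {x\<in>R. x \<le> s}" using A unfolding flag_def by auto
    have "s < u" using u s uR by auto
    have "A \<subseteq> I" using s \<open>s < u\<close> unfolding I_def by auto
    moreover have "u \<in> I - A" using u uR unfolding I_def by auto
    ultimately show ?thesis by blast
  qed
  have "I \<subseteq> B" using t uR unfolding I_def by auto
  moreover have "w \<in> B - I" using uw w unfolding I_def by auto
  ultimately have "I \<subset> B" by blast
  with \<open>A \<subset> I\<close> show False using nb I by blast
qed

lemma flag_above:
  assumes fin: "finite R" and S: "S \<noteq> {}" "S \<notin> flag R"
    and cmp: "\<forall>X\<in>flag R. S \<subseteq> X \<or> X \<subseteq> S"
  shows "R \<subseteq> S"
proof (rule ccontr)
  assume "\<not> R \<subseteq> S"
  then have ex: "\<exists>x. x \<in> R \<and> x \<notin> S" by blast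
  define t where "t = (LEAST x. x \<in> R \<and> x \<notin> S)"
  have t: "t \<in> R" "t \<notin> S" using LeastI_ex[OF ex] unfolding t_def by auto
  have lt: "\<And>x. x \<in> R \<Longrightarrow> x < t \<Longrightarrow> x \<in> S"
    using not_less_Least unfolding t_def by blast
  have It: "{x\<in>R. x \<le> t} \<in> flag R" unfolding flag_def using t by auto
  have "S \<subseteq> {x\<in>R. x \<le> t} \<or> {x\<in>R. x \<le> t} \<subseteq> S" using cmp It by (rule bspec)
  moreover have "\<not> {x\<in>R. x \<le> t} \<subseteq> S" using t by auto
  ultimately have Ssub: "S \<subseteq> {x\<in>R. x \<le> t}" by blast
  have Seq: "S = {x\<in>R. x < t}"
  proof
    show "S \<subseteq> {x\<in>R. x < t}" using Ssub t(2) by (auto simp: le_less)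
    show "{x\<in>R. x < t} \<subseteq> S" using lt by blast
  qed
  then have finS: "finite S" using fin by auto
  define s where "s = Max S"
  have sS: "s \<in> S" using finS S unfolding s_def by auto
  have "S = {x\<in>R. x \<le> s}"
  proof
    show "S \<subseteq> {x\<in>R. x \<le> s}" using finS Seq unfolding s_def by auto
    show "{x\<in>R. x \<le> s} \<subseteq> S" using sS Seq by auto
  qed
  moreover have "s \<in> R" using sS Seq by auto
  ultimately have "S \<in> flag R" unfolding flag_def by auto
  then show False using S by blast
qed



lemma hyp_parts:
  assumes "hypergraph n E"
  shows "\<And>e. e\<in>E \<Longrightarrow> e \<noteq> {} \<and> e \<subseteq> {1..n}" "\<And>e. e\<in>E \<Longrightarrow> card e \<noteq> 1"
    "\<And>e e'. e\<in>E \<Longrightarrow> e'\<in>E \<Longrightarrow> \<not> e \<subset> e'"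
  using assms unfolding hypergraph_def by blast+

lemma edge_facts:
  assumes hyp: "hypergraph n E" and e: "e \<in> E"
  shows "e \<subseteq> {1..n}" "finite e" "e \<noteq> {}" "\<And>u. \<not> e \<subseteq> {u}"
proof -
  show 1: "e \<subseteq> {1..n}" "e \<noteq> {}" using hyp_parts(1)[OF hyp e] by auto
  show 2: "finite e" using 1 finite_subset by blast
  fix u show "\<not> e \<subseteq> {u}"
  proof
    assume "e \<subseteq> {u}"
    then have "e = {u}" using 1 by blast
    then show False using hyp_parts(2)[OF hyp e] by simp
  qed
qed

lemma edge_anti:
  assumes hyp: "hypergraph n E" and e: "e \<in> E" and f: "f \<in> E" and "f \<subseteq> X" "X \<subset> e"
  shows False
proof -
  have "f \<subset> e" using assms(4,5) by blast
  then show False using hyp_parts(3)[OF hyp f e] by blast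
qed



lemma vkey_inj: "finite (\<Union>L) \<Longrightarrow> inj_on (vkey L) (\<Union>L)"
proof -
  assume "finite (\<Union>L)"
  then obtain f :: "_ \<Rightarrow> nat" and m where "inj_on f (\<Union>L)"
    using finite_imp_inj_to_nat_seg by blast
  then show ?thesis unfolding vkey_def by (rule someI[where P="\<lambda>f. inj_on f (\<Union>L)"])
qed

lemma bsign_single: "bsign L {v} v = 1"
proof -
  have eq: "{w\<in>{v}. vkey L w < vkey L v} = {}" by auto
  show ?thesis unfolding bsign_def eq by simp
qed

lemma bsign_pair:
  assumes "x \<noteq> w" "x \<in> \<Union>L" "w \<in> \<Union>L" "finite (\<Union>L)"
  shows "bsign L {w,x} w = (if vkey L x < vkey L w then -1 else 1)"
proof -
  have "{u\<in>{w,x}. vkey L u < vkey L w} = (if vkey L x < vkey L w then {x} else {})"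
    by auto
  then show ?thesis unfolding bsign_def by auto
qed

lemma comp_not_vanish:
  fixes L :: "'v set set" and C :: "'v set"
  assumes fin: "finite (\<Union>L)"
    and a: "{a} \<in> L" and b: "{b} \<in> L" and aC: "a \<in> C" and bC: "b \<notin> C"
    and cl: "\<And>y z. {y,z} \<in> L \<Longrightarrow> y \<noteq> z \<Longrightarrow> y \<in> C \<Longrightarrow> z \<in> C"
  shows "\<not> red_homology_vanishes TYPE('k::field) L 1"
proof
  assume van: "red_homology_vanishes TYPE('k) L 1"
  have ab: "a \<noteq> b" using aC bC by blast
  have aU: "a \<in> \<Union>L" and bU: "b \<in> \<Union>L" using a b by blast+
  define c :: "'v set \<Rightarrow> 'k" where
    "c = (\<lambda>\<sigma>. if \<sigma> = {a} then 1 else if \<sigma> = {b} then -1 else 0)"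
  have ch: "is_chain L 1 c" unfolding is_chain_def c_def using a b by auto
  have bd: "bdry L c = (\<lambda>_. 0)"
  proof
    fix \<tau> :: "'v set"
    show "bdry L c \<tau> = 0"
    proof (cases "\<tau> = {}")
      case True
      have "bdry L c \<tau> = (\<Sum>v\<in>\<Union>L. c {v})"
        unfolding bdry_def True by (simp add: bsign_single)
      also have "\<dots> = (\<Sum>v\<in>{a,b}. c {v})"
        by (rule sum.mono_neutral_right[OF fin]) (use aU bU in \<open>auto simp: c_def\<close>)
      also have "\<dots> = 0" using ab by (simp add: c_def)
      finally show ?thesis .
    next
      case False
      have "\<And>v. v \<in> \<Union>L - \<tau> \<Longrightarrow> c (insert v \<tau>) = 0"
      proof -
        fix v assume v: "v \<in> \<Union>L - \<tau>"
        have "insert v \<tau> \<noteq> {a}" using False v by (metis Diff_iff insert_absorb insert_eq_iff singleton_insert_inj_eq subset_singletonD subset_insertI)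
        moreover have "insert v \<tau> \<noteq> {b}" using False v by (metis Diff_iff insert_absorb insert_eq_iff singleton_insert_inj_eq subset_singletonD subset_insertI)
        ultimately show "c (insert v \<tau>) = 0" unfolding c_def by simp
      qed
      then show ?thesis unfolding bdry_def by simp
    qed
  qed
  obtain \<beta> :: "'v set \<Rightarrow> 'k" where chb: "is_chain L 2 \<beta>" and bb: "bdry L \<beta> = c"
    using van ch bd unfolding red_homology_vanishes_def by (metis numeral_2_eq_2 One_nat_def)
  define V where "V = {x\<in>\<Union>L. x \<in> C}"
  have finV: "finite V" unfolding V_def by (rule finite_subset[OF _ fin]) blast
  have aV: "a \<in> V" using aU aC unfolding V_def by auto
  have s1: "(\<Sum>x\<in>V. c {x}) = 1"
  proof -
    have "(\<Sum>x\<in>V. c {x}) = (\<Sum>x\<in>{a}. c {x})"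
      by (rule sum.mono_neutral_right[OF finV]) (use aV bC in \<open>auto simp: c_def V_def\<close>)
    then show ?thesis by (simp add: c_def)
  qed
  define f where "f = (\<lambda>(x,w). bsign L {w,x} w * \<beta> {w,x})"
  define P where "P = Sigma V (\<lambda>x. V - {x})"
  have finP: "finite P" unfolding P_def using finV by auto
  have inner: "\<And>x. x \<in> V \<Longrightarrow> bdry L \<beta> {x} = (\<Sum>w\<in>V - {x}. f (x,w))"
  proof -
    fix x assume xV: "x \<in> V"
    have "bdry L \<beta> {x} = (\<Sum>w\<in>\<Union>L - {x}. f (x,w))"
      unfolding bdry_def f_def by simp
    also have "\<dots> = (\<Sum>w\<in>V - {x}. f (x,w))"
    proof (rule sum.mono_neutral_right)
      show "finite (\<Union>L - {x})" using fin by auto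
      show "V - {x} \<subseteq> \<Union>L - {x}" unfolding V_def by auto
      show "\<forall>w\<in>\<Union>L - {x} - (V - {x}). f (x, w) = 0"
      proof
        fix w assume w: "w \<in> \<Union>L - {x} - (V - {x})"
        show "f (x,w) = 0"
        proof (rule ccontr)
          assume "f (x,w) \<noteq> 0"
          then have "\<beta> {w,x} \<noteq> 0" unfolding f_def by auto
          then have "{w,x} \<in> L" using chb unfolding is_chain_def by blast
          then have "{x,w} \<in> L" by (simp add: insert_commute)
          then have "w \<in> C" using cl w xV unfolding V_def by blast
          then show False using w unfolding V_def by blast
        qed
      qed
    qed
    finally show "bdry L \<beta> {x} = (\<Sum>w\<in>V - {x}. f (x,w))" .
  qed
  have "(\<Sum>x\<in>V. c {x}) = (\<Sum>x\<in>V. \<Sum>w\<in>V - {x}. f (x,w))"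
    using inner bb by (auto intro: sum.cong)
  also have "\<dots> = (\<Sum>p\<in>P. f p)"
    unfolding P_def using sum.Sigma[OF finV, of "\<lambda>x. V - {x}" "\<lambda>x w. f (x,w)"] finV
    by (simp add: case_prod_beta')
  also have "\<dots> = 0"
  proof -
    let ?k = "vkey L"
    have inj: "inj_on ?k (\<Union>L)" using vkey_inj[OF fin] .
    define P1 where "P1 = {p\<in>P. ?k (fst p) < ?k (snd p)}"
    define P2 where "P2 = {p\<in>P. ?k (snd p) < ?k (fst p)}"
    have PU: "P = P1 \<union> P2"
    proof -
      have "\<And>x w. (x,w) \<in> P \<Longrightarrow> ?k x \<noteq> ?k w"
        using inj unfolding P_def V_def inj_on_def by auto
      then show ?thesis unfolding P1_def P2_def by (force simp: linorder_neq_iff)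
    qed
    have dis: "P1 \<inter> P2 = {}" unfolding P1_def P2_def by auto
    have "(\<Sum>p\<in>P. f p) = (\<Sum>p\<in>P1. f p) + (\<Sum>p\<in>P2. f p)"
      unfolding PU by (rule sum.union_disjoint) (use finP PU dis in auto)
    also have "(\<Sum>p\<in>P2. f p) = (\<Sum>p\<in>P1. f (prod.swap p))"
    proof (rule sum.reindex_bij_betw[symmetric])
      show "bij_betw prod.swap P1 P2"
        by (rule bij_betw_byWitness[where f'=prod.swap]) (auto simp: P1_def P2_def P_def)
    qed
    also have "(\<Sum>p\<in>P1. f p) + (\<Sum>p\<in>P1. f (prod.swap p)) = (\<Sum>p\<in>P1. f p + f (prod.swap p))"
      by (simp add: sum.distrib)
    also have "\<dots> = 0"
    proof (rule sum.neutral, rule ballI)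
      fix p assume p: "p \<in> P1"
      obtain x w where pxw: "p = (x,w)" by (cases p)
      have xw: "x \<noteq> w" "x \<in> \<Union>L" "w \<in> \<Union>L" "?k x < ?k w"
        using p unfolding pxw P1_def P_def V_def by auto
      have s1: "(bsign L {w,x} w :: 'k) = -1" using bsign_pair[OF xw(1-3) fin] xw(4) by simp
      have s2: "(bsign L {x,w} x :: 'k) = 1"
        using bsign_pair[OF xw(1)[symmetric] xw(3) xw(2) fin] xw(4) by simp
      have "f p = - \<beta> {w,x}"
        unfolding pxw f_def using s1 by simp
      moreover have "f (prod.swap p) = \<beta> {x,w}"
        unfolding pxw f_def using s2 by simp
      ultimately show "f p + f (prod.swap p) = 0" by (simp add: insert_commute)
    qed
    finally show ?thesis .
  qed
  finally show False using s1 by simp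
qed



lemma face_flag_intro:
  assumes RU: "R \<subseteq> {1..n}"
    and X: "\<forall>Y\<in>X. R \<subset> Y \<and> Y \<subset> {1..n}"
    and chX: "\<forall>A\<in>X. \<forall>B\<in>X. A \<subseteq> B \<or> B \<subseteq> A"
    and A: "A \<in> insert R (insert {1..n} X)" and B: "B \<in> insert R (insert {1..n} X)"
    and AB: "A \<subset> B" and nb: "\<forall>D\<in>X. \<not> (A \<subset> D \<and> D \<subset> B)"
    and e: "e \<in> E" "e \<subseteq> B - A"
  shows "flag R \<union> X \<in> coloring_complex n E"
proof -
  have finR: "finite R" using RU finite_subset by blast
  have RA: "R \<subseteq> A"
    using A proof (elim insertE)
    assume "A = {1..n}" then show ?thesis using RU by simp
  qed (use X in auto)
  have BU: "B \<subseteq> {1..n}"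
    using B proof (elim insertE)
    assume "B = R" then show ?thesis using RU by simp
  qed (use X in auto)
  have RpU: "R \<subset> {1..n}" using RA AB BU by (meson subset_psubset_trans psubset_subset_trans)
  have s1: "flag R \<union> X \<subseteq> {A. A \<noteq> {} \<and> A \<subset> {1..n}}"
  proof
    fix Y assume "Y \<in> flag R \<union> X"
    then show "Y \<in> {A. A \<noteq> {} \<and> A \<subset> {1..n}}"
    proof
      assume "Y \<in> flag R"
      then have "Y \<noteq> {}" "Y \<subseteq> R" using flag_ne by auto
      then show ?thesis using RpU by auto
    next
      assume "Y \<in> X"
      then have "R \<subset> Y" "Y \<subset> {1..n}" using X by auto
      then show ?thesis by auto
    qed
  qed
  have s2: "\<forall>A\<in>flag R \<union> X. \<forall>B\<in>flag R \<union> X. A \<subseteq> B \<or> B \<subseteq> A"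
  proof (intro ballI)
    fix Y Z assume Y: "Y \<in> flag R \<union> X" and Z: "Z \<in> flag R \<union> X"
    have fl: "\<And>W. W \<in> flag R \<Longrightarrow> W \<subseteq> R" using flag_ne by blast
    have xl: "\<And>W. W \<in> X \<Longrightarrow> R \<subseteq> W" using X by blast
    show "Y \<subseteq> Z \<or> Z \<subseteq> Y"
      using Y Z flag_chain[of Y R Z] chX fl xl by (metis UnE subset_trans)
  qed
  have A': "A \<in> insert {} (insert {1..n} (flag R \<union> X))"
  proof (cases "A = R")
    case True
    then show ?thesis using flag_top[OF finR] by (cases "R = {}") auto
  next
    case False then show ?thesis using A by auto
  qed
  have B': "B \<in> insert {} (insert {1..n} (flag R \<union> X))"
  proof (cases "B = R")
    case True
    then show ?thesis using flag_top[OF finR] by (cases "R = {}") auto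
  next
    case False then show ?thesis using B by auto
  qed
  have nb': "\<forall>D\<in>flag R \<union> X. \<not> (A \<subset> D \<and> D \<subset> B)"
  proof
    fix D assume "D \<in> flag R \<union> X"
    then show "\<not> (A \<subset> D \<and> D \<subset> B)"
    proof
      assume "D \<in> flag R" then have "D \<subseteq> R" using flag_ne by blast
      then show ?thesis using RA by blast
    qed (use nb in blast)
  qed
  show ?thesis unfolding coloring_complex_def
    apply (rule CollectI, intro conjI s1 s2)
    apply (rule bexI[OF _ A'], rule bexI[OF _ B'])
    using AB nb' e by blast
qed



lemma cc_D:
  assumes "C \<in> coloring_complex n E"
  shows "C \<subseteq> {A. A \<noteq> {} \<and> A \<subset> {1..n}}" "\<forall>A\<in>C. \<forall>B\<in>C. A \<subseteq> B \<or> B \<subseteq> A"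
    "\<exists>A\<in>insert {} (insert {1..n} C). \<exists>B\<in>insert {} (insert {1..n} C).
            A \<subset> B \<and> (\<forall>D\<in>C. \<not> (A \<subset> D \<and> D \<subset> B)) \<and> (\<exists>e\<in>E. e \<subseteq> B - A)"
proof -
  note h = assms[unfolded coloring_complex_def mem_Collect_eq]
  show "C \<subseteq> {A. A \<noteq> {} \<and> A \<subset> {1..n}}" using h by (rule conjunct1)
  show "\<forall>A\<in>C. \<forall>B\<in>C. A \<subseteq> B \<or> B \<subseteq> A" using h[THEN conjunct2] by (rule conjunct1)
  show "\<exists>A\<in>insert {} (insert {1..n} C). \<exists>B\<in>insert {} (insert {1..n} C).
            A \<subset> B \<and> (\<forall>D\<in>C. \<not> (A \<subset> D \<and> D \<subset> B)) \<and> (\<exists>e\<in>E. e \<subseteq> B - A)"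
    using h[THEN conjunct2] by (rule conjunct2)
qed

lemma wit_pair:
  assumes "A \<in> S" "B \<in> S" "A \<subset> B" "\<forall>D\<in>X. \<not> (A \<subset> D \<and> D \<subset> B)" "e \<in> E" "e \<subseteq> B - A"
  shows "\<exists>A\<in>S. \<exists>B\<in>S. A \<subset> B \<and> (\<forall>D\<in>X. \<not> (A \<subset> D \<and> D \<subset> B)) \<and> (\<exists>e\<in>E. e \<subseteq> B - A)"
  using assms by blast

lemma face_flag_elim:
  assumes hyp: "hypergraph n E" and RU: "R \<subseteq> {1..n}"
    and X: "\<forall>Y\<in>X. R \<subset> Y"
    and K: "flag R \<union> X \<in> coloring_complex n E"
  shows "\<exists>A\<in>insert R (insert {1..n} X). \<exists>B\<in>insert R (insert {1..n} X).
           A \<subset> B \<and> (\<forall>D\<in>X. \<not> (A \<subset> D \<and> D \<subset> B)) \<and> (\<exists>e\<in>E. e \<subseteq> B - A)"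
proof -
  have finR: "finite R" using RU finite_subset by blast
  let ?C = "flag R \<union> X"
  have prp: "?C \<subseteq> {A. A \<noteq> {} \<and> A \<subset> {1..n}}" using cc_D(1)[OF K] .
  from cc_D(3)[OF K] obtain A where A: "A \<in> insert {} (insert {1..n} ?C)"
    and hA: "\<exists>B\<in>insert {} (insert {1..n} ?C). A \<subset> B \<and> (\<forall>D\<in>?C. \<not> (A \<subset> D \<and> D \<subset> B)) \<and> (\<exists>e\<in>E. e \<subseteq> B - A)"
    by (rule bexE)
  from hA obtain B where B: "B \<in> insert {} (insert {1..n} ?C)"
    and rest: "A \<subset> B \<and> (\<forall>D\<in>?C. \<not> (A \<subset> D \<and> D \<subset> B)) \<and> (\<exists>e\<in>E. e \<subseteq> B - A)"
    by (rule bexE)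
  have AB: "A \<subset> B" using rest by (rule conjunct1)
  have nb: "\<forall>D\<in>?C. \<not> (A \<subset> D \<and> D \<subset> B)" using rest[THEN conjunct2] by (rule conjunct1)
  from rest[THEN conjunct2, THEN conjunct2] obtain e where e: "e \<in> E" "e \<subseteq> B - A"
    by (rule bexE)
  have nbX: "\<forall>D\<in>X. \<not> (A \<subset> D \<and> D \<subset> B)" using nb by blast
  show ?thesis
  proof (cases "B \<subseteq> R")
    case True
    have Bne: "B \<noteq> {}" using AB by blast
    have BX: "B \<notin> X"
    proof
      assume "B \<in> X" then have "R \<subset> B" using X by blast
      then show False using True by blast
    qed
    have BnU: "B \<noteq> {1..n}"
    proof
      assume BU: "B = {1..n}"
      then have RU': "R = {1..n}" using True RU by blast
      then have "R \<noteq> {}" using Bne BU by simp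
      then have "R \<in> flag R" using flag_top[OF finR] by simp
      then have "R \<subset> {1..n}" using prp by blast
      then show False using RU' by simp
    qed
    have Bf: "B \<in> flag R" using B Bne BX BnU by blast
    have AX: "A \<notin> X"
    proof
      assume "A \<in> X" then have "R \<subset> A" using X by blast
      then show False using True AB by blast
    qed
    have "A \<noteq> {1..n}"
    proof
      assume "A = {1..n}"
      then have "{1..n} \<subset> B" using AB by simp
      moreover have "B \<subseteq> {1..n}" using Bf prp by blast
      ultimately show False by blast
    qed
    then have Af: "A \<in> insert {} (flag R)" using A AX by blast
    have nbf: "\<forall>D\<in>flag R. \<not> (A \<subset> D \<and> D \<subset> B)" using nb by simp
    obtain u where u: "u \<in> e" using edge_facts(3)[OF hyp e(1)] by blast
    have "e \<subseteq> {u}"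
    proof
      fix w assume w: "w \<in> e"
      have "u \<in> B - A" "w \<in> B - A" using u w e(2) by auto
      then have "w = u" using flag_consec[OF Af Bf AB nbf] by metis
      then show "w \<in> {u}" by blast
    qed
    then show ?thesis using edge_facts(4)[OF hyp e(1)] by blast
  next
    case False
    have Bnf: "B \<notin> flag R" using False flag_ne[of B R] by blast
    have BX: "B \<in> insert R (insert {1..n} X)" using B False Bnf by blast
    have RB: "R \<subset> B"
    proof -
      have "B = {1..n} \<or> B \<in> X" using BX False by blast
      then show ?thesis using X RU False by blast
    qed
    show ?thesis
    proof (cases "A \<subseteq> R")
      case True
      have "A = R"
      proof (rule ccontr)
        assume "A \<noteq> R"
        then have AR: "A \<subset> R" using True by blast
        then have "R \<noteq> {}" by blast
        then have "R \<in> ?C" using flag_top[OF finR] by blast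
        then show False using nb AR RB by blast
      qed
      then have "A \<in> insert R (insert {1..n} X)" by simp
      then show ?thesis by (rule wit_pair[OF _ BX AB nbX e])
    next
      case False
      have Anf: "A \<notin> flag R" using False flag_ne[of A R] by blast
      have "A \<noteq> {}" using False by blast
      then have "A \<in> insert R (insert {1..n} X)" using A Anf by blast
      then show ?thesis by (rule wit_pair[OF _ BX AB nbX e])
    qed
  qed
qed

lemma link_above:
  assumes RU: "R \<subseteq> {1..n}"
    and G: "G \<in> link (coloring_complex n E) (flag R \<union> Y)" and S: "S \<in> G"
  shows "R \<subset> S"
proof -
  have finR: "finite R" using RU finite_subset by blast
  have K: "G \<union> (flag R \<union> Y) \<in> coloring_complex n E" and dis: "G \<inter> (flag R \<union> Y) = {}"
    using G unfolding link_def by auto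
  have SG: "S \<in> G \<union> (flag R \<union> Y)" using S by simp
  have Sne: "S \<noteq> {}" using cc_D(1)[OF K] SG by blast
  have Snf: "S \<notin> flag R" using dis S by blast
  have cmp: "\<forall>X\<in>flag R. S \<subseteq> X \<or> X \<subseteq> S" using cc_D(2)[OF K] SG by blast
  have "R \<subseteq> S" using flag_above[OF finR Sne Snf cmp] .
  moreover have "R \<noteq> S" using Sne Snf flag_top[OF finR] by auto
  ultimately show ?thesis by blast
qed



lemma consec5:
  assumes c: "c0 \<subset> c1" "c1 \<subset> c2" "c2 \<subset> c3" "c3 \<subset> c4"
    and A: "A \<in> {c0,c1,c2,c3,c4}" and B: "B \<in> {c0,c1,c2,c3,c4}" and AB: "A \<subset> B"
    and nb: "\<forall>D\<in>{c1,c2,c3}. \<not> (A \<subset> D \<and> D \<subset> B)"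
  shows "(A=c0 \<and> B=c1) \<or> (A=c1 \<and> B=c2) \<or> (A=c2 \<and> B=c3) \<or> (A=c3 \<and> B=c4)"
proof -
  have t: "c0 \<subset> c2" "c0 \<subset> c3" "c0 \<subset> c4" "c1 \<subset> c3" "c1 \<subset> c4" "c2 \<subset> c4"
    using c by (meson psubset_trans)+
  have n1: "\<not> (A \<subset> c1 \<and> c1 \<subset> B)" "\<not> (A \<subset> c2 \<and> c2 \<subset> B)" "\<not> (A \<subset> c3 \<and> c3 \<subset> B)"
    using nb by auto
  show ?thesis
    using A B AB n1 c t by auto
qed

lemma consec4:
  assumes c: "c0 \<subset> c1" "c1 \<subset> c2" "c2 \<subset> c3"
    and A: "A \<in> {c0,c1,c2,c3}" and B: "B \<in> {c0,c1,c2,c3}" and AB: "A \<subset> B"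
    and nb: "\<forall>D\<in>{c1,c2}. \<not> (A \<subset> D \<and> D \<subset> B)"
  shows "(A=c0 \<and> B=c1) \<or> (A=c1 \<and> B=c2) \<or> (A=c2 \<and> B=c3)"
proof -
  have t: "c0 \<subset> c2" "c0 \<subset> c3" "c1 \<subset> c3"
    using c by (meson psubset_trans)+
  have n1: "\<not> (A \<subset> c1 \<and> c1 \<subset> B)" "\<not> (A \<subset> c2 \<and> c2 \<subset> B)"
    using nb by auto
  show ?thesis
    using A B AB n1 c t by auto
qed



lemma flag_empty: "flag {} = {}" unfolding flag_def by simp

lemma plain_face:
  assumes X: "\<forall>Y\<in>X. {} \<subset> Y \<and> Y \<subset> {1..n}"
    and chX: "\<forall>A\<in>X. \<forall>B\<in>X. A \<subseteq> B \<or> B \<subseteq> A"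
    and A: "A \<in> insert {} (insert {1..n} X)" and B: "B \<in> insert {} (insert {1..n} X)"
    and AB: "A \<subset> B" and nb: "\<forall>D\<in>X. \<not> (A \<subset> D \<and> D \<subset> B)"
    and e: "e \<in> E" "e \<subseteq> B - A"
  shows "X \<in> coloring_complex n E"
  using face_flag_intro[of "{}" n X A B e E] assms by (simp add: flag_empty)

lemma finite_link:
  "finite (link (coloring_complex n E) F) \<and> finite (\<Union>(link (coloring_complex n E) F))"
proof -
  have sub: "link (coloring_complex n E) F \<subseteq> Pow (Pow {1..n})"
    unfolding link_def coloring_complex_def by auto
  have "finite (Pow (Pow {1..n}))" by simp
  then have f1: "finite (link (coloring_complex n E) F)" using sub finite_subset by blast
  have "\<Union>(link (coloring_complex n E) F) \<subseteq> Pow {1..n}" using sub by blast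
  then have "finite (\<Union>(link (coloring_complex n E) F))" using finite_subset by blast
  with f1 show ?thesis by blast
qed

lemma not_cm_from_link:
  assumes F: "F \<in> coloring_complex n E"
    and G2: "G2 \<in> link (coloring_complex n E) F" "card G2 = 2"
    and nv: "\<not> red_homology_vanishes TYPE('k::field) (link (coloring_complex n E) F) 1"
  shows "\<not> cohen_macaulay_over TYPE('k::field) (coloring_complex n E)"
proof
  assume cm: "cohen_macaulay_over TYPE('k) (coloring_complex n E)"
  have fin: "finite (card ` link (coloring_complex n E) F)" using finite_link by blast
  have "2 \<le> Max (card ` link (coloring_complex n E) F)"
    using Max_ge[OF fin, of 2] G2 by auto
  then have "(1::nat) < Max (card ` link (coloring_complex n E) F)" by simp
  then show False using cm F nv unfolding cohen_macaulay_over_def by blast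
qed



lemma caseA:
  assumes hyp: "hypergraph n E" and g: "g \<in> E" and h: "h \<in> E" and gh: "g \<inter> h = {}"
    and h3: "3 \<le> card h"
  shows "\<not> cohen_macaulay_over TYPE('k::field) (coloring_complex n E)"
proof -
  let ?U = "{1..n::nat}"
  have gU: "g \<subseteq> ?U" and hU: "h \<subseteq> ?U" and fh: "finite h"
    using edge_facts[OF hyp g] edge_facts[OF hyp h] by auto
  define R where "R = ?U - (g \<union> h)"
  define P where "P = R \<union> g"
  define F where "F = flag R \<union> {P}"
  define L where "L = link (coloring_complex n E) F"
  have RU: "R \<subseteq> ?U" unfolding R_def by blast
  have gR: "g \<inter> R = {}" "h \<inter> R = {}" unfolding R_def by auto
  have hP: "h \<inter> P = {}" using gR gh unfolding P_def by blast
  have UPh: "?U = P \<union> h" unfolding P_def R_def using gU hU by blast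
  obtain x where x: "x \<in> g" using edge_facts(3)[OF hyp g] by blast
  obtain x' where x': "x' \<in> g" "x' \<noteq> x" using edge_facts(4)[OF hyp g, of x] by blast
  obtain y where y: "y \<in> h" using edge_facts(3)[OF hyp h] by blast
  obtain z where z: "z \<in> h" "z \<noteq> y" using edge_facts(4)[OF hyp h, of y] by blast
  have cd: "card (h - {y,z}) = card h - 2"
    using card_Diff_subset[of "{y,z}" h] y z fh by simp
  have "h - {y,z} \<noteq> {}"
  proof
    assume "h - {y,z} = {}"
    then have "h \<subseteq> {y,z}" by blast
    then have "card h \<le> card {y,z}" by (rule card_mono[rotated]) simp
    moreover have "card {y,z} = 2" using z by simp
    ultimately show False using h3 by simp
  qed
  then obtain z' where z': "z' \<in> h" "z' \<noteq> y" "z' \<noteq> z" by blast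
  define v where "v = R \<union> {x}"
  define w where "w = P \<union> {y}"
  define w' where "w' = P \<union> (h - {z})"
  have RP: "R \<subset> P" using x gR unfolding P_def by blast
  have PU: "P \<subset> ?U" using y hP UPh by blast
  have Rv: "R \<subset> v" using x gR unfolding v_def by blast
  have vP: "v \<subset> P" using x x' gR unfolding v_def P_def by blast
  have Pw: "P \<subset> w" using y hP unfolding w_def by blast
  have ww': "w \<subset> w'" using y z z' hP unfolding w_def w'_def by blast
  have w'U: "w' \<subset> ?U" using z hP UPh unfolding w'_def by blast
  have vU: "v \<subset> ?U" using vP PU by blast
  have wU: "w \<subset> ?U" using ww' w'U by blast
  have vnf: "v \<notin> flag R" using flag_ne[of v R] x gR unfolding v_def by blast
  have wnf: "w \<notin> flag R" using flag_ne[of w R] Pw RP by blast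
  have w'nf: "w' \<notin> flag R" using flag_ne[of w' R] Pw ww' RP by blast
  have FK: "F \<in> coloring_complex n E"
    unfolding F_def
    by (rule face_flag_intro[of R n "{P}" R P g]) (use RU RP PU g gR in \<open>auto simp: P_def\<close>)
  have vL: "{v} \<in> L"
  proof -
    have "{v} \<in> coloring_complex n E"
      by (rule plain_face[of "{v}" n v ?U h]) (use vU Rv x gR h hU gh in \<open>auto simp: v_def\<close>)
    moreover have "{v} \<inter> F = {}" using vnf vP unfolding F_def by blast
    moreover have "{v} \<union> F \<in> coloring_complex n E"
    proof -
      have "flag R \<union> {P, v} \<in> coloring_complex n E"
        by (rule face_flag_intro[of R n "{P,v}" P ?U h]) (use RU RP PU Rv vP vU h UPh hP hU in auto)
      moreover have "{v} \<union> F = flag R \<union> {P, v}" unfolding F_def by blast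
      ultimately show ?thesis by simp
    qed
    ultimately show ?thesis unfolding L_def link_def by blast
  qed
  have wL: "{w} \<in> L"
  proof -
    have "{w} \<in> coloring_complex n E"
      by (rule plain_face[of "{w}" n "{}" w g]) (use wU Pw RP g in \<open>auto simp: w_def P_def\<close>)
    moreover have "{w} \<inter> F = {}" using wnf Pw unfolding F_def by blast
    moreover have "{w} \<union> F \<in> coloring_complex n E"
    proof -
      have "flag R \<union> {P, w} \<in> coloring_complex n E"
        by (rule face_flag_intro[of R n "{P,w}" R P g]) (use RU RP PU Pw wU g gR in \<open>auto simp: P_def\<close>)
      moreover have "{w} \<union> F = flag R \<union> {P, w}" unfolding F_def by blast
      ultimately show ?thesis by simp
    qed
    ultimately show ?thesis unfolding L_def link_def by blast
  qed
  have ww'L: "{w,w'} \<in> L"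
  proof -
    have "{w,w'} \<in> coloring_complex n E"
      by (rule plain_face[of "{w,w'}" n "{}" w g]) (use wU w'U ww' Pw RP g in \<open>auto simp: w_def P_def\<close>)
    moreover have "{w,w'} \<inter> F = {}" using wnf w'nf Pw ww' unfolding F_def by blast
    moreover have "{w,w'} \<union> F \<in> coloring_complex n E"
    proof -
      have "flag R \<union> {P, w, w'} \<in> coloring_complex n E"
        by (rule face_flag_intro[of R n "{P,w,w'}" R P g])
          (use RU RP PU Pw wU ww' w'U g gR in \<open>auto simp: P_def\<close>)
      moreover have "{w,w'} \<union> F = flag R \<union> {P, w, w'}" unfolding F_def by blast
      ultimately show ?thesis by simp
    qed
    ultimately show ?thesis unfolding L_def link_def by blast
  qed
  have card2: "card {w,w'} = 2" using ww' by auto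
  have cl: "\<And>y1 z1. {y1,z1} \<in> L \<Longrightarrow> y1 \<noteq> z1 \<Longrightarrow> y1 \<in> {S. S \<subset> P} \<Longrightarrow> z1 \<in> {S. S \<subset> P}"
  proof -
    fix y1 z1 assume G: "{y1,z1} \<in> L" and yz: "y1 \<noteq> z1" and yC: "y1 \<in> {S. S \<subset> P}"
    show "z1 \<in> {S. S \<subset> P}"
    proof (rule ccontr)
      assume zC: "z1 \<notin> {S. S \<subset> P}"
      have GL: "{y1,z1} \<in> link (coloring_complex n E) (flag R \<union> {P})" using G unfolding L_def F_def .
      have Ry: "R \<subset> y1" using link_above[OF RU GL] by blast
      have Rz: "R \<subset> z1" using link_above[OF RU GL] by blast
      have GK: "{y1,z1} \<union> F \<in> coloring_complex n E" and dis: "{y1,z1} \<inter> F = {}"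
        using G unfolding L_def link_def by auto
      have yP: "y1 \<subset> P" using yC by simp
      have zP: "z1 \<noteq> P" using dis unfolding F_def by blast
      have "z1 \<subseteq> P \<or> P \<subseteq> z1" using cc_D(2)[OF GK] unfolding F_def by blast
      then have Pz: "P \<subset> z1" using zP zC by blast
      have zU: "z1 \<subset> ?U" using cc_D(1)[OF GK] by blast
      have eq: "{y1,z1} \<union> F = flag R \<union> {P, y1, z1}" unfolding F_def by blast
      have K2: "flag R \<union> {P, y1, z1} \<in> coloring_complex n E" using GK eq by simp
      have Xa: "\<forall>Y\<in>{P, y1, z1}. R \<subset> Y" using RP Ry Rz by blast
      from face_flag_elim[OF hyp RU Xa K2] obtain A where
        A: "A \<in> insert R (insert ?U {P, y1, z1})" and
        hA: "\<exists>B\<in>insert R (insert ?U {P, y1, z1}). A \<subset> B \<and> (\<forall>D\<in>{P, y1, z1}. \<not> (A \<subset> D \<and> D \<subset> B)) \<and> (\<exists>e\<in>E. e \<subseteq> B - A)"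
        by (rule bexE)
      from hA obtain B where B: "B \<in> insert R (insert ?U {P, y1, z1})"
        and rest: "A \<subset> B \<and> (\<forall>D\<in>{P, y1, z1}. \<not> (A \<subset> D \<and> D \<subset> B)) \<and> (\<exists>e\<in>E. e \<subseteq> B - A)"
        by (rule bexE)
      have AB: "A \<subset> B" using rest by (rule conjunct1)
      have nb: "\<forall>D\<in>{P, y1, z1}. \<not> (A \<subset> D \<and> D \<subset> B)" using rest[THEN conjunct2] by (rule conjunct1)
      from rest[THEN conjunct2, THEN conjunct2] obtain e' where e': "e' \<in> E" "e' \<subseteq> B - A"
        by (rule bexE)
      have A': "A \<in> {R, y1, P, z1, ?U}" using A by blast
      have B': "B \<in> {R, y1, P, z1, ?U}" using B by blast
      have nb': "\<forall>D\<in>{y1, P, z1}. \<not> (A \<subset> D \<and> D \<subset> B)" using nb by (simp add: insert_commute)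
      have cs: "(A=R \<and> B=y1) \<or> (A=y1 \<and> B=P) \<or> (A=P \<and> B=z1) \<or> (A=z1 \<and> B=?U)"
        by (rule consec5[OF Ry yP Pz zU A' B' AB nb'])
      have s1: "y1 - R \<subset> g"
      proof -
        have "y1 - R \<subseteq> g" using yP unfolding P_def by blast
        moreover obtain p where "p \<in> P" "p \<notin> y1" using yP by blast
        then have "p \<in> g" "p \<notin> y1 - R" using Ry unfolding P_def by blast+
        ultimately show ?thesis by blast
      qed
      have s2: "P - y1 \<subset> g"
      proof -
        have "P - y1 \<subseteq> g" using Ry unfolding P_def by blast
        moreover obtain p where "p \<in> y1" "p \<notin> R" using Ry by blast
        then have "p \<in> g" "p \<notin> P - y1" using yP unfolding P_def by blast+
        ultimately show ?thesis by blast
      qed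
      have s3: "z1 - P \<subset> h"
      proof -
        have "z1 - P \<subseteq> h" using zU UPh by blast
        moreover obtain p where "p \<in> ?U" "p \<notin> z1" using zU by blast
        then have "p \<in> h" "p \<notin> z1 - P" using Pz UPh by blast+
        ultimately show ?thesis by blast
      qed
      have s4: "?U - z1 \<subset> h"
      proof -
        have "?U - z1 \<subseteq> h" using Pz UPh by blast
        moreover obtain p where "p \<in> z1" "p \<notin> P" using Pz by blast
        then have "p \<in> h" "p \<notin> ?U - z1" using zU UPh by blast+
        ultimately show ?thesis by blast
      qed
      show False
        using cs
      proof (elim disjE conjE)
        assume "A = R" "B = y1" then show False using edge_anti[OF hyp g e'(1) _ s1] e'(2) by simp
      next
        assume "A = y1" "B = P" then show False using edge_anti[OF hyp g e'(1) _ s2] e'(2) by simp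
      next
        assume "A = P" "B = z1" then show False using edge_anti[OF hyp h e'(1) _ s3] e'(2) by simp
      next
        assume "A = z1" "B = ?U" then show False using edge_anti[OF hyp h e'(1) _ s4] e'(2) by simp
      qed
    qed
  qed
  have nv: "\<not> red_homology_vanishes TYPE('k) L 1"
  proof (rule comp_not_vanish[OF _ vL wL _ _ cl])
    show "finite (\<Union>L)" using finite_link unfolding L_def by blast
    show "v \<in> {S. S \<subset> P}" using vP by simp
    show "w \<notin> {S. S \<subset> P}" using Pw by auto
  qed
  show ?thesis
    using not_cm_from_link[OF FK[unfolded F_def] ww'L[unfolded L_def F_def] card2 nv[unfolded L_def F_def]] .
qed



lemma caseB:
  assumes hyp: "hypergraph n E" and e: "e \<in> E" and f: "f \<in> E" and e3: "3 \<le> card e"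
    and f2: "card f = 2" and ef: "e \<inter> f \<noteq> {}"
  shows "\<not> cohen_macaulay_over TYPE('k::field) (coloring_complex n E)"
proof -
  let ?U = "{1..n::nat}"
  have eU: "e \<subseteq> ?U" and fU: "f \<subseteq> ?U" and fe: "finite e"
    using edge_facts[OF hyp e] edge_facts[OF hyp f] by auto
  obtain a b where ab: "f = {a,b}" "a \<noteq> b" using f2 by (meson card_2_iff)
  have "\<not> f \<subseteq> e"
  proof
    assume fsub: "f \<subseteq> e"
    have "f \<noteq> e" using f2 e3 by auto
    then show False using edge_anti[OF hyp e f _ _] fsub by blast
  qed
  then have "\<exists>a b. f = {a,b} \<and> a \<in> e \<and> b \<notin> e" using ab ef by blast
  then obtain a b where ab: "f = {a,b}" and ae: "a \<in> e" and be: "b \<notin> e" by blast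
  obtain x where x: "x \<in> e" "x \<noteq> a" using edge_facts(4)[OF hyp e, of a] by blast
  have cd: "card (e - {a,x}) = card e - 2"
    using card_Diff_subset[of "{a,x}" e] ae x fe by auto
  have "e - {a,x} \<noteq> {}"
  proof
    assume "e - {a,x} = {}"
    then have "e \<subseteq> {a,x}" by blast
    then have "card e \<le> card {a,x}" by (rule card_mono[rotated]) simp
    moreover have "card {a,x} = 2" using x by simp
    ultimately show False using e3 by simp
  qed
  then obtain x2 where x2: "x2 \<in> e" "x2 \<noteq> a" "x2 \<noteq> x" by blast
  have bU: "b \<in> ?U" using fU ab by blast
  define R where "R = ?U - (e \<union> {b})"
  define v where "v = R \<union> e"
  define S where "S = R \<union> {x}"
  define T where "T = R \<union> (e - {a})"
  define L where "L = link (coloring_complex n E) (flag R)"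
  have RU: "R \<subseteq> ?U" unfolding R_def by blast
  have eR: "e \<inter> R = {}" "b \<notin> R" unfolding R_def by auto
  have Uv: "?U - v = {b}" unfolding v_def R_def using bU be by auto
  have aU: "a \<in> ?U" using ae eU by blast
  have UT: "?U - T = f" unfolding T_def R_def ab using aU bU be ae by auto
  have Rv: "R \<subset> v" using ae eR unfolding v_def by blast
  have vU: "v \<subset> ?U"
  proof -
    have "v \<subseteq> ?U" unfolding v_def using RU eU by blast
    moreover have "b \<notin> v" using Uv by blast
    ultimately show ?thesis using bU by blast
  qed
  have RS: "R \<subset> S" using x eR unfolding S_def by blast
  have ST: "S \<subset> T" using x x2 eR unfolding S_def T_def by blast
  have TU: "T \<subset> ?U"
  proof -
    have "T \<subseteq> ?U" unfolding T_def using RU eU by blast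
    moreover have "a \<notin> T" using UT ab by blast
    ultimately show ?thesis using aU by blast
  qed
  have SU: "S \<subset> ?U" using ST TU by blast
  have vnf: "v \<notin> flag R" using flag_ne[of v R] Rv by blast
  have Snf: "S \<notin> flag R" using flag_ne[of S R] RS by blast
  have Tnf: "T \<notin> flag R" using flag_ne[of T R] RS ST by blast
  have FK: "flag R \<in> coloring_complex n E"
  proof -
    have RpU: "R \<subset> ?U" using Rv vU by blast
    have "e \<subseteq> ?U - R" using eU eR by blast
    then show ?thesis using face_flag_intro[of R n "{}" R ?U e E] RU e RpU by simp
  qed
  have vL: "{v} \<in> L"
  proof -
    have "{v} \<in> coloring_complex n E"
      by (rule plain_face[of "{v}" n "{}" v e]) (use vU Rv e in \<open>auto simp: v_def\<close>)
    moreover have "{v} \<inter> flag R = {}" using vnf by blast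
    moreover have "{v} \<union> flag R \<in> coloring_complex n E"
    proof -
      have "flag R \<union> {v} \<in> coloring_complex n E"
        by (rule face_flag_intro[of R n "{v}" R v e]) (use RU Rv vU e eR in \<open>auto simp: v_def\<close>)
      then show ?thesis by (simp add: Un_commute)
    qed
    ultimately show ?thesis unfolding L_def link_def by blast
  qed
  have SL: "{S} \<in> L"
  proof -
    have fUS: "f \<subseteq> ?U - S" using UT ST by blast
    have "{S} \<in> coloring_complex n E"
      by (rule plain_face[of "{S}" n S ?U f]) (use SU RS f fUS in auto)
    moreover have "{S} \<inter> flag R = {}" using Snf by blast
    moreover have "{S} \<union> flag R \<in> coloring_complex n E"
    proof -
      have "flag R \<union> {S} \<in> coloring_complex n E"
        by (rule face_flag_intro[of R n "{S}" S ?U f]) (use RU RS SU f fUS in auto)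
      then show ?thesis by (simp add: Un_commute)
    qed
    ultimately show ?thesis unfolding L_def link_def by blast
  qed
  have STL: "{S,T} \<in> L"
  proof -
    have fUT: "f \<subseteq> ?U - T" using UT by blast
    have "{S,T} \<in> coloring_complex n E"
      by (rule plain_face[of "{S,T}" n T ?U f]) (use SU TU RS ST f fUT in auto)
    moreover have "{S,T} \<inter> flag R = {}" using Snf Tnf by blast
    moreover have "{S,T} \<union> flag R \<in> coloring_complex n E"
    proof -
      have "flag R \<union> {S,T} \<in> coloring_complex n E"
        by (rule face_flag_intro[of R n "{S,T}" T ?U f]) (use RU RS ST SU TU f fUT in auto)
      then show ?thesis by (simp add: Un_commute)
    qed
    ultimately show ?thesis unfolding L_def link_def by blast
  qed
  have card2: "card {S,T} = 2" using ST by auto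
  have cl: "\<And>y1 z1. {y1,z1} \<in> L \<Longrightarrow> y1 \<noteq> z1 \<Longrightarrow> y1 \<in> {v} \<Longrightarrow> z1 \<in> {v}"
  proof -
    fix y1 z1 assume G: "{y1,z1} \<in> L" and yz: "y1 \<noteq> z1" and yC: "y1 \<in> {v}"
    show "z1 \<in> {v}"
    proof (rule ccontr)
      assume zC: "z1 \<notin> {v}"
      have yv: "y1 = v" using yC by simp
      have GL: "{y1,z1} \<in> link (coloring_complex n E) (flag R \<union> {})" using G unfolding L_def by simp
      have Rz: "R \<subset> z1" using link_above[OF RU GL] by blast
      have GK: "{y1,z1} \<union> flag R \<in> coloring_complex n E"
        using G unfolding L_def link_def by auto
      have "v \<in> {y1,z1} \<union> flag R" "z1 \<in> {y1,z1} \<union> flag R" using yv by auto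
      then have "z1 \<subseteq> v \<or> v \<subseteq> z1" using cc_D(2)[OF GK] by blast
      moreover have zU: "z1 \<subset> ?U" using cc_D(1)[OF GK] by blast
      moreover have "\<not> v \<subset> z1"
      proof
        assume vz: "v \<subset> z1"
        obtain q where q: "q \<in> z1" "q \<notin> v" using vz by blast
        have "q \<in> ?U" using q(1) zU by blast
        then have "q \<in> ?U - v" using q(2) by blast
        then have qb: "q = b" using Uv by (metis singletonD)
        have "?U \<subseteq> z1"
        proof
          fix p assume p: "p \<in> ?U"
          show "p \<in> z1"
          proof (cases "p \<in> v")
            case True then show ?thesis using vz by blast
          next
            case False
            then have "p \<in> ?U - v" using p by blast
            then have "p = b" using Uv by (metis singletonD)
            then show ?thesis using q(1) qb by simp
          qed
        qed
        then show False using zU by blast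
      qed
      ultimately have zv: "z1 \<subset> v" using zC by blast
      have K2: "flag R \<union> {v, z1} \<in> coloring_complex n E" using GK yv by (simp add: Un_commute)
      have Xa: "\<forall>Y\<in>{v, z1}. R \<subset> Y" using Rv Rz by blast
      from face_flag_elim[OF hyp RU Xa K2] obtain A where
        A: "A \<in> insert R (insert ?U {v, z1})" and
        hA: "\<exists>B\<in>insert R (insert ?U {v, z1}). A \<subset> B \<and> (\<forall>D\<in>{v, z1}. \<not> (A \<subset> D \<and> D \<subset> B)) \<and> (\<exists>e\<in>E. e \<subseteq> B - A)"
        by (rule bexE)
      from hA obtain B where B: "B \<in> insert R (insert ?U {v, z1})"
        and rest: "A \<subset> B \<and> (\<forall>D\<in>{v, z1}. \<not> (A \<subset> D \<and> D \<subset> B)) \<and> (\<exists>e\<in>E. e \<subseteq> B - A)"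
        by (rule bexE)
      have AB: "A \<subset> B" using rest by (rule conjunct1)
      have nb: "\<forall>D\<in>{v, z1}. \<not> (A \<subset> D \<and> D \<subset> B)" using rest[THEN conjunct2] by (rule conjunct1)
      from rest[THEN conjunct2, THEN conjunct2] obtain e' where e': "e' \<in> E" "e' \<subseteq> B - A"
        by (rule bexE)
      have A': "A \<in> {R, z1, v, ?U}" using A by blast
      have B': "B \<in> {R, z1, v, ?U}" using B by blast
      have nb': "\<forall>D\<in>{z1, v}. \<not> (A \<subset> D \<and> D \<subset> B)" using nb by (simp add: insert_commute)
      have cs: "(A=R \<and> B=z1) \<or> (A=z1 \<and> B=v) \<or> (A=v \<and> B=?U)"
        by (rule consec4[OF Rz zv vU A' B' AB nb'])
      have s1: "z1 - R \<subset> e"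
      proof -
        have "z1 - R \<subseteq> e" using zv unfolding v_def by blast
        moreover obtain p where "p \<in> v" "p \<notin> z1" using zv by blast
        then have "p \<in> e" "p \<notin> z1 - R" using Rz unfolding v_def by blast+
        ultimately show ?thesis by blast
      qed
      have s2: "v - z1 \<subset> e"
      proof -
        have "v - z1 \<subseteq> e" using Rz unfolding v_def by blast
        moreover obtain p where "p \<in> z1" "p \<notin> R" using Rz by blast
        then have "p \<in> e" "p \<notin> v - z1" using zv unfolding v_def by blast+
        ultimately show ?thesis by blast
      qed
      show False
        using cs
      proof (elim disjE conjE)
        assume "A = R" "B = z1" then show False using edge_anti[OF hyp e e'(1) _ s1] e'(2) by simp
      next
        assume "A = z1" "B = v" then show False using edge_anti[OF hyp e e'(1) _ s2] e'(2) by simp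
      next
        assume "A = v" "B = ?U"
        then have "e' \<subseteq> {b}" using e'(2) Uv by simp
        then show False using edge_facts(4)[OF hyp e'(1)] by blast
      qed
    qed
  qed
  have nv: "\<not> red_homology_vanishes TYPE('k) L 1"
  proof (rule comp_not_vanish[OF _ vL SL _ _ cl])
    show "finite (\<Union>L)" using finite_link unfolding L_def by blast
    show "v \<in> {v}" by simp
    show "S \<notin> {v}" using ae x eR unfolding S_def v_def by blast
  qed
  show ?thesis
    using not_cm_from_link[OF FK STL[unfolded L_def] card2 nv[unfolded L_def]] .
qed

lemma edge_card2:
  assumes hyp: "hypergraph n E" and e: "e \<in> E"
  shows "2 \<le> card e"
proof -
  have "finite e" "e \<noteq> {}" using edge_facts[OF hyp e] by auto
  then have "card e \<noteq> 0" by simp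
  moreover have "card e \<noteq> 1" using hyp_parts(2)[OF hyp e] .
  ultimately show ?thesis by linarith
qed

theorem mainTheorem3:
  fixes n :: nat and E :: "nat set set"
  assumes "hypergraph n E"
    and "\<exists>e\<in>E. card e > 2"
    and "\<exists>e1\<in>E. \<exists>e2\<in>E. e1 \<inter> e2 = {}"
  shows "\<not> cohen_macaulay_over TYPE('k::field) (coloring_complex n E)"
proof -
  note hyp = assms(1)
  obtain e where e: "e \<in> E" "2 < card e" using assms(2) by blast
  obtain e1 e2 where e12: "e1 \<in> E" "e2 \<in> E" "e1 \<inter> e2 = {}" using assms(3) by blast
  show ?thesis
  proof (cases "\<exists>g\<in>E. \<exists>h\<in>E. g \<inter> h = {} \<and> 3 \<le> card h")
    case True
    then obtain g h where "g \<in> E" "h \<in> E" "g \<inter> h = {}" "3 \<le> card h" by blast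
    then show ?thesis using caseA[OF hyp] by blast
  next
    case False
    have "\<not> 3 \<le> card e1" using False e12 by (metis inf_commute)
    then have c1: "card e1 = 2" using edge_card2[OF hyp e12(1)] by linarith
    have "e \<inter> e1 \<noteq> {}"
    proof
      assume "e \<inter> e1 = {}"
      then have "e1 \<inter> e = {}" by blast
      moreover have "3 \<le> card e" using e(2) by simp
      ultimately show False using False e12(1) e(1) by blast
    qed
    then show ?thesis using caseB[OF hyp e(1) e12(1) _ c1] e(2) by simp
  qed
qed


end
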